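(* Let $\Phi$ be a randomized learning algorithm that maps a dataset to a feature extractor and is $(\epsilon_{\mathrm{DP}},\delta_{\mathrm{DP}})$-differentially private. For each feature extractor $\phi$, let $A(\cdot,\phi)$ be the algorithm that trains a linear model on the features produced by $\phi$ by minimizing the perturbed loss $L_{\mathbf{b}}$, and let $M$ be a removal mechanism that guarantees $(\epsilon_{\mathrm{CR}},\delta_{\mathrm{CR}})$-certified removal for $A(\cdot,\phi)$. Then the entire procedure (training $\phi=\Phi(\mathcal{D})$, training $A(\mathcal{D},\phi)$, and removing $\mathbf{x}\in\mathcal{D}$ via $M$, compared against $A(\mathcal{D}\setminus\mathbf{x},\Phi(\mathcal{D}\setminus\mathbf{x}))$) guarantees $(\epsilon_{\mathrm{DP}}+\epsilon_{\mathrm{CR}},\delta_{\mathrm{DP}}+\delta_{\mathrm{CR}})$-certified removal.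
   Context: $L_{\mathbf{b}}(\mathbf{w};\mathcal{D})=\sum_{i}\ell(\mathbf{w}^\top\phi(\mathbf{x}_i),y_i)+\frac{\lambda n}{2}\|\mathbf{w}\|_2^2+\mathbf{b}^\top\mathbf{w}$ with random $\mathbf{b}$. A randomized algorithm $\Phi$ is $(\epsilon,\delta)$-differentially private if for all datasets $\mathcal{D},\mathcal{D}''$ differing in one sample and all measurable sets $S$, $P(\Phi(\mathcal{D})\in S)\le e^{\epsilon}P(\Phi(\mathcal{D}'')\in S)+\delta$. For a randomized learning algorithm $A$ with model space $\mathcal{H}$ and a removal mechanism $M(A(\mathcal{D}),\mathcal{D},\mathbf{x})$, $M$ is $(\epsilon,\delta)$-certified removal for $A$ if for all measurable $\mathcal{T}\subseteq\mathcal{H}$, all datasets $\mathcal{D}$ and all $\mathbf{x}\in\mathcal{D}$: $P(M(A(\mathcal{D}),\mathcal{D},\mathbf{x})\in\mathcal{T})\le e^{\epsilon}P(A(\mathcal{D}\setminus\mathbf{x})\in\mathcal{T})+\delta$ and $P(A(\mathcal{D}\setminus\mathbf{x})\in\mathcal{T})\le e^{\epsilon}P(M(A(\mathcal{D}),\mathcal{D},\mathbf{x})\in\mathcal{T})+\delta$. *)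

theory Defs
  imports "HOL-Probability.Probability" "HOL-Library.Multiset"
begin

text \<open>Datasets are finite multisets of samples; removing a sample x from D is D - {#x#}.
  Two datasets differ in one sample if one is obtained from the other by adding one sample.\<close>

definition neighbors :: "'z multiset \<Rightarrow> 'z multiset \<Rightarrow> bool" where
  "neighbors D D' \<longleftrightarrow> (\<exists>z. D' = add_mset z D) \<or> (\<exists>z. D = add_mset z D')"

text \<open>A randomized algorithm is given by the output distribution for each dataset.\<close>

definition differentially_private ::
  "real \<Rightarrow> real \<Rightarrow> 'h measure \<Rightarrow> ('z multiset \<Rightarrow> 'h measure) \<Rightarrow> bool" where
  "differentially_private \<epsilon> \<delta> H Phi \<longleftrightarrow>
     (\<forall>D D'. neighbors D D' \<longrightarrow>
        (\<forall>S \<in> sets H. measure (Phi D) S \<le> exp \<epsilon> * measure (Phi D') S + \<delta>))"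

definition certified_removal ::
  "real \<Rightarrow> real \<Rightarrow> 'h measure \<Rightarrow> ('z multiset \<Rightarrow> 'h measure)
     \<Rightarrow> ('h \<Rightarrow> 'z multiset \<Rightarrow> 'z \<Rightarrow> 'h) \<Rightarrow> bool" where
  "certified_removal \<epsilon> \<delta> H A M \<longleftrightarrow>
     (\<forall>T \<in> sets H. \<forall>D. \<forall>x. x \<in># D \<longrightarrow>
        measure (distr (A D) H (\<lambda>h. M h D x)) T \<le> exp \<epsilon> * measure (A (D - {#x#})) T + \<delta> \<and>
        measure (A (D - {#x#})) T \<le> exp \<epsilon> * measure (distr (A D) H (\<lambda>h. M h D x)) T + \<delta>)"

definition perturbed_loss ::
  "(real \<Rightarrow> 'y \<Rightarrow> real) \<Rightarrow> real \<Rightarrow> ('x \<Rightarrow> 'f::euclidean_space)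
     \<Rightarrow> ('x \<times> 'y) multiset \<Rightarrow> 'f \<Rightarrow> 'f \<Rightarrow> real" where
  "perturbed_loss loss lam phi D b w =
     sum_mset (image_mset (\<lambda>(x, y). loss (w \<bullet> phi x) y) D)
     + lam * real (size D) / 2 * (norm w)\<^sup>2 + b \<bullet> w"

definition perturbed_minimizer ::
  "(real \<Rightarrow> 'y \<Rightarrow> real) \<Rightarrow> real \<Rightarrow> ('x \<Rightarrow> 'f::euclidean_space)
     \<Rightarrow> ('x \<times> 'y) multiset \<Rightarrow> 'f \<Rightarrow> 'f" where
  "perturbed_minimizer loss lam phi D b =
     (SOME w. \<forall>v. perturbed_loss loss lam phi D b w \<le> perturbed_loss loss lam phi D b v)"

definition full_training ::
  "'p measure \<Rightarrow> 'w measure \<Rightarrow> ('z multiset \<Rightarrow> 'p measure)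
     \<Rightarrow> ('z multiset \<Rightarrow> 'p \<Rightarrow> 'w measure) \<Rightarrow> 'z multiset \<Rightarrow> ('p \<times> 'w) measure" where
  "full_training F W Phi A D = Phi D \<bind> (\<lambda>phi. distr (A D phi) (F \<Otimes>\<^sub>M W) (\<lambda>w. (phi, w)))"

definition full_removal ::
  "('p \<Rightarrow> 'w \<Rightarrow> 'z multiset \<Rightarrow> 'z \<Rightarrow> 'w) \<Rightarrow> ('p \<times> 'w) \<Rightarrow> 'z multiset \<Rightarrow> 'z \<Rightarrow> ('p \<times> 'w)" where
  "full_removal M pw D x = (fst pw, M (fst pw) (snd pw) D x)"

end

theory Submission imports Defs begin


lemma count_floor:
  fixes y :: real and n :: nat
  assumes "0 \<le> y" "y \<le> 1" "n > 0"
  shows "(\<Sum>k\<in>{1..n}. (if real k / real n \<le> y then 1 else 0::real)) = real (nat \<lfloor>real n * y\<rfloor>)"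
proof -
  define m where "m = nat \<lfloor>real n * y\<rfloor>"
  have fl0: "0 \<le> \<lfloor>real n * y\<rfloor>" using assms by simp
  have mn: "m \<le> n"
  proof -
    have "real n * y \<le> real n" using assms by (simp add: mult_left_le)
    then have "\<lfloor>real n * y\<rfloor> \<le> \<lfloor>real n\<rfloor>" by (rule floor_mono)
    then have "\<lfloor>real n * y\<rfloor> \<le> int n" by (simp only: floor_of_nat)
    then show ?thesis unfolding m_def using fl0 by linarith
  qed
  have iff: "real k / real n \<le> y \<longleftrightarrow> k \<le> m" for k
  proof -
    have "real k / real n \<le> y \<longleftrightarrow> real k \<le> y * real n"
      using assms(3) by (rule pos_divide_le_eq[OF of_nat_0_less_iff[THEN iffD2]])
    also have "\<dots> \<longleftrightarrow> real k \<le> real n * y" by (simp only: mult.commute)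
    also have "\<dots> \<longleftrightarrow> int k \<le> \<lfloor>real n * y\<rfloor>" by (rule le_floor_iff[symmetric, where x="real n * y" and z="int k", simplified])
    also have "\<dots> \<longleftrightarrow> k \<le> m" unfolding m_def using fl0 by linarith
    finally show ?thesis .
  qed
  have eq: "{k\<in>{1..n}. real k / real n \<le> y} = {1..m}"
  proof (rule set_eqI)
    fix k :: nat
    have "k \<in> {k\<in>{1..n}. real k / real n \<le> y} \<longleftrightarrow> (1 \<le> k \<and> k \<le> n) \<and> k \<le> m"
      by (simp only: mem_Collect_eq atLeastAtMost_iff iff)
    also have "\<dots> \<longleftrightarrow> 1 \<le> k \<and> k \<le> m" using mn by auto
    also have "\<dots> \<longleftrightarrow> k \<in> {1..m}" by (simp only: atLeastAtMost_iff)
    finally show "k \<in> {k\<in>{1..n}. real k / real n \<le> y} \<longleftrightarrow> k \<in> {1..m}" .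
  qed
  have "(\<Sum>k\<in>{1..n}. (if real k / real n \<le> y then 1 else 0::real)) = (\<Sum>k\<in>{k\<in>{1..n}. real k / real n \<le> y}. 1)"
    by (rule sum.inter_filter[symmetric]) simp
  also have "\<dots> = (\<Sum>k\<in>{1..m}. 1)" by (simp only: eq)
  also have "\<dots> = real m" by simp
  finally show ?thesis unfolding m_def .
qed

lemma dp_fun:
  fixes P Q F :: "'a measure" and f :: "'a \<Rightarrow> real"
  assumes P: "prob_space P" and Q: "prob_space Q"
    and sP: "sets P = sets F" and sQ: "sets Q = sets F"
    and dp: "\<forall>S\<in>sets F. measure P S \<le> e * measure Q S + d" and e: "0 \<le> e"
    and f[measurable]: "f \<in> borel_measurable F" and f01: "\<forall>x\<in>space F. 0 \<le> f x \<and> f x \<le> 1"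
  shows "(\<integral>x. f x \<partial>P) \<le> e * (\<integral>x. f x \<partial>Q) + d"
proof -
  have spP: "space P = space F" using sP by (rule sets_eq_imp_space_eq)
  have spQ: "space Q = space F" using sQ by (rule sets_eq_imp_space_eq)
  have fP[measurable]: "f \<in> borel_measurable P" using f by (simp add: measurable_cong_sets[OF sP refl])
  have fQ[measurable]: "f \<in> borel_measurable Q" using f by (simp add: measurable_cong_sets[OF sQ refl])
  have intP: "integrable P f"
    by (rule finite_measure.integrable_const_bound[where B=1])
       (use P f01 spP in \<open>auto simp: prob_space_def\<close>)
  have intQ: "integrable Q f"
    by (rule finite_measure.integrable_const_bound[where B=1])
       (use Q f01 spQ in \<open>auto simp: prob_space_def\<close>)
  have step: "(\<integral>x. f x \<partial>P) \<le> e * (\<integral>x. f x \<partial>Q) + d + 1 / real n" if n: "n > 0" for n :: nat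
  proof -
    define S where "S k = {x\<in>space F. real k / real n \<le> f x}" for k :: nat
    have S[measurable]: "S k \<in> sets F" for k unfolding S_def by measurable
    define s where "s x = (\<Sum>k\<in>{1..n}. indicator (S k) x :: real) / real n" for x
    have s_eq: "s x = real (nat \<lfloor>real n * f x\<rfloor>) / real n" if "x \<in> space F" for x
    proof -
      have "(\<Sum>k\<in>{1..n}. indicator (S k) x :: real) = (\<Sum>k\<in>{1..n}. (if real k / real n \<le> f x then 1 else 0::real))"
        using that by (intro sum.cong) (auto simp: S_def indicator_def)
      then show ?thesis unfolding s_def using count_floor[of "f x" n] f01 that n by simp
    qed
    have s_le: "s x \<le> f x" if "x \<in> space F" for x
    proof -
      have "real (nat \<lfloor>real n * f x\<rfloor>) \<le> real n * f x" using f01 that n by simp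
      then show ?thesis using s_eq[OF that] n by (simp add: divide_le_eq mult.commute)
    qed
    have s_ge: "f x - 1 / real n \<le> s x" if "x \<in> space F" for x
    proof -
      have "real n * f x - 1 \<le> real (nat \<lfloor>real n * f x\<rfloor>)" using f01 that n by linarith
      then show ?thesis using s_eq[OF that] n by (simp add: field_simps)
    qed
    have ints: "integrable M (\<lambda>x. indicator (S k) x :: real)" if "prob_space M" "sets M = sets F" for M k
      using that S[of k] by (intro integrable_real_indicator) (auto simp: less_top[symmetric] prob_space_def finite_measure.emeasure_finite)
    have int_s: "(\<integral>x. s x \<partial>M) = (\<Sum>k\<in>{1..n}. measure M (S k)) / real n"
      if M: "prob_space M" "sets M = sets F" for M
    proof -
      have sp: "space M = space F" using M(2) by (rule sets_eq_imp_space_eq)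
      have "(\<integral>x. s x \<partial>M) = (\<integral>x. (\<Sum>k\<in>{1..n}. indicator (S k) x :: real) \<partial>M) / real n"
        unfolding s_def by simp
      also have "\<dots> = (\<Sum>k\<in>{1..n}. (\<integral>x. indicator (S k) x \<partial>M)) / real n"
        using ints[OF M] by (simp add: integral_sum)
      also have "\<dots> = (\<Sum>k\<in>{1..n}. measure M (S k)) / real n"
        using S sp by (simp add: S_def Int_absorb2)
      finally show ?thesis .
    qed
    have intsP: "integrable P s" unfolding s_def using ints[OF P sP] by auto
    have intsQ: "integrable Q s" unfolding s_def using ints[OF Q sQ] by auto
    have "integrable P (\<lambda>x. s x + 1 / real n)"
      using intsP P by (intro Bochner_Integration.integrable_add) (auto simp: prob_space_def finite_measure.integrable_const)
    then have a1: "(\<integral>x. f x \<partial>P) \<le> (\<integral>x. s x + 1 / real n \<partial>P)"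
      using intP intsP s_ge spP by (intro integral_mono) (auto simp: algebra_simps)
    have a2: "(\<integral>x. s x + 1 / real n \<partial>P) = (\<integral>x. s x \<partial>P) + 1 / real n"
      using intsP P by (subst Bochner_Integration.integral_add) (auto simp: prob_space_def finite_measure.integrable_const prob_space.prob_space)
    have a3: "(\<integral>x. s x \<partial>P) \<le> e * (\<integral>x. s x \<partial>Q) + d"
    proof -
      have "(\<Sum>k\<in>{1..n}. measure P (S k)) \<le> (\<Sum>k\<in>{1..n}. e * measure Q (S k) + d)"
        using dp S by (intro sum_mono) auto
      also have "\<dots> = e * (\<Sum>k\<in>{1..n}. measure Q (S k)) + real n * d"
        by (simp add: sum.distrib sum_distrib_left)
      finally have "(\<Sum>k\<in>{1..n}. measure P (S k)) / real n \<le> (e * (\<Sum>k\<in>{1..n}. measure Q (S k)) + real n * d) / real n"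
        using n by (simp add: divide_right_mono)
      also have "\<dots> = e * ((\<Sum>k\<in>{1..n}. measure Q (S k)) / real n) + d"
        using n by (simp add: field_simps)
      finally show ?thesis using int_s[OF P sP] int_s[OF Q sQ] by simp
    qed
    have "(\<integral>x. s x \<partial>Q) \<le> (\<integral>x. f x \<partial>Q)"
      using intQ intsQ s_le spQ by (intro integral_mono) auto
    then have a4: "e * (\<integral>x. s x \<partial>Q) \<le> e * (\<integral>x. f x \<partial>Q)" using e by (rule mult_left_mono)
    show ?thesis using a1 a2 a3 a4 by linarith
  qed
  show ?thesis
  proof (rule field_le_epsilon)
    fix \<epsilon> :: real assume "0 < \<epsilon>"
    then obtain n :: nat where n: "n > 0" "inverse (real n) < \<epsilon>"
      using ex_inverse_of_nat_less by blast
    show "(\<integral>x. f x \<partial>P) \<le> e * (\<integral>x. f x \<partial>Q) + d + \<epsilon>"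
      using step[OF n(1)] n(2) by (simp add: inverse_eq_divide)
  qed
qed

lemma compose:
  fixes P Q F :: "'a measure" and r k :: "'a \<Rightarrow> real"
  assumes P: "prob_space P" and Q: "prob_space Q"
    and sP: "sets P = sets F" and sQ: "sets Q = sets F"
    and dp: "\<forall>S\<in>sets F. measure P S \<le> e1 * measure Q S + d1" and e1: "0 \<le> e1"
    and e2: "0 \<le> e2" and d2: "0 \<le> d2"
    and r[measurable]: "r \<in> borel_measurable F" and k[measurable]: "k \<in> borel_measurable F"
    and r01: "\<forall>x\<in>space F. 0 \<le> r x \<and> r x \<le> 1"
    and k01: "\<forall>x\<in>space F. 0 \<le> k x \<and> k x \<le> 1"
    and rk: "\<forall>x\<in>space F. r x \<le> e2 * k x + d2"
  shows "(\<integral>x. r x \<partial>P) \<le> e1 * e2 * (\<integral>x. k x \<partial>Q) + d1 + d2"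
proof -
  have spP: "space P = space F" using sP by (rule sets_eq_imp_space_eq)
  have spQ: "space Q = space F" using sQ by (rule sets_eq_imp_space_eq)
  define m where "m x = min 1 (e2 * k x)" for x
  have m[measurable]: "m \<in> borel_measurable F" unfolding m_def by measurable
  have m01: "\<forall>x\<in>space F. 0 \<le> m x \<and> m x \<le> 1" using k01 e2 by (auto simp: m_def)
  have bnd: "integrable M g" if "prob_space M" "sets M = sets F" "g \<in> borel_measurable F"
     "\<forall>x\<in>space F. 0 \<le> g x \<and> g x \<le> 1" for M and g :: "'a \<Rightarrow> real"
  proof -
    have sp: "space M = space F" using that(2) by (rule sets_eq_imp_space_eq)
    have gM: "g \<in> borel_measurable M" using that(3) by (simp add: measurable_cong_sets[OF that(2) refl])
    show ?thesis
      by (rule finite_measure.integrable_const_bound[where B=1])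
         (use that sp gM in \<open>auto simp: prob_space_def\<close>)
  qed
  have iPr: "integrable P r" by (rule bnd[OF P sP r r01])
  have iPm: "integrable P m" by (rule bnd[OF P sP m m01])
  have iQm: "integrable Q m" by (rule bnd[OF Q sQ m m01])
  have iQk: "integrable Q k" by (rule bnd[OF Q sQ k k01])
  have "integrable P (\<lambda>x. m x + d2)"
    using iPm P by (intro Bochner_Integration.integrable_add) (auto simp: prob_space_def finite_measure.integrable_const)
  then have b1: "(\<integral>x. r x \<partial>P) \<le> (\<integral>x. m x + d2 \<partial>P)"
    using iPr rk r01 d2 spP by (intro integral_mono) (auto simp: m_def min_def)
  have b2: "(\<integral>x. m x + d2 \<partial>P) = (\<integral>x. m x \<partial>P) + d2"
    using iPm P by (subst Bochner_Integration.integral_add) (auto simp: prob_space_def finite_measure.integrable_const prob_space.prob_space)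
  have b3: "(\<integral>x. m x \<partial>P) \<le> e1 * (\<integral>x. m x \<partial>Q) + d1"
    by (rule dp_fun[OF P Q sP sQ dp e1 m m01])
  have "(\<integral>x. m x \<partial>Q) \<le> (\<integral>x. e2 * k x \<partial>Q)"
    by (rule integral_mono[OF iQm]) (use iQk spQ in \<open>auto simp: m_def\<close>)
  also have "\<dots> = e2 * (\<integral>x. k x \<partial>Q)" by simp
  finally have "e1 * (\<integral>x. m x \<partial>Q) \<le> e1 * (e2 * (\<integral>x. k x \<partial>Q))" using e1 by (rule mult_left_mono)
  then show ?thesis using b1 b2 b3 by (simp add: mult.assoc)
qed

lemma measure_bind_real:
  assumes P: "P \<in> space (prob_algebra F)" and R[measurable]: "R \<in> F \<rightarrow>\<^sub>M prob_algebra N"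
    and T[measurable]: "T \<in> sets N"
  shows "measure (P \<bind> R) T = (\<integral>x. measure (R x) T \<partial>P)"
proof -
  have sP: "sets P = sets F" and pP: "prob_space P" using P by (auto simp: space_prob_algebra)
  have spP: "space P = space F" using sP by (rule sets_eq_imp_space_eq)
  have Rx: "prob_space (R x)" "sets (R x) = sets N" if "x \<in> space F" for x
    using measurable_space[OF R that] by (auto simp: space_prob_algebra)
  have meas: "(\<lambda>x. measure (R x) T) \<in> borel_measurable F" by measurable
  then have measP: "(\<lambda>x. measure (R x) T) \<in> borel_measurable P"
    by (simp add: measurable_cong_sets[OF sP refl])
  have int: "integrable P (\<lambda>x. measure (R x) T)"
    by (rule finite_measure.integrable_const_bound[where B=1])
       (use pP measP spP Rx in \<open>auto simp: prob_space_def prob_space.prob_le_1\<close>)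
  have "emeasure (P \<bind> R) T = (\<integral>\<^sup>+x. emeasure (R x) T \<partial>P)"
    by (rule emeasure_bind_prob_algebra[OF P R T])
  also have "\<dots> = (\<integral>\<^sup>+x. ennreal (measure (R x) T) \<partial>P)"
    using Rx spP by (intro nn_integral_cong) (simp add: prob_space_def finite_measure.emeasure_eq_measure)
  also have "\<dots> = ennreal (\<integral>x. measure (R x) T \<partial>P)"
    using int by (intro nn_integral_eq_integral) auto
  finally show ?thesis unfolding measure_def
    by (simp add: integral_nonneg_AE)
qed

theorem theorem5:
  fixes F :: "('x \<Rightarrow> 'f::euclidean_space) measure"
    and Phi :: "('x \<times> 'y) multiset \<Rightarrow> ('x \<Rightarrow> 'f) measure"
    and A :: "('x \<times> 'y) multiset \<Rightarrow> ('x \<Rightarrow> 'f) \<Rightarrow> 'f measure"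
    and M :: "('x \<Rightarrow> 'f) \<Rightarrow> 'f \<Rightarrow> ('x \<times> 'y) multiset \<Rightarrow> ('x \<times> 'y) \<Rightarrow> 'f"
    and loss :: "real \<Rightarrow> 'y \<Rightarrow> real"
    and lam :: real
    and \<beta> :: "'f measure"
    and \<epsilon>DP \<delta>DP \<epsilon>CR \<delta>CR :: real
  assumes Phi_prob: "\<And>D. Phi D \<in> space (prob_algebra F)"
    and Phi_DP: "differentially_private \<epsilon>DP \<delta>DP F Phi"
    and A_kernel: "\<And>D. A D \<in> F \<rightarrow>\<^sub>M prob_algebra borel"
    and A_def: "\<And>D phi. phi \<in> space F \<Longrightarrow>
                  A D phi = distr \<beta> borel (perturbed_minimizer loss lam phi D)"
    and M_meas: "\<And>D x. (\<lambda>(phi, w). M phi w D x) \<in> F \<Otimes>\<^sub>M borel \<rightarrow>\<^sub>M borel"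
    and M_CR: "\<And>phi. phi \<in> space F \<Longrightarrow>
                 certified_removal \<epsilon>CR \<delta>CR borel (\<lambda>D. A D phi) (\<lambda>w D x. M phi w D x)"
  shows "certified_removal (\<epsilon>DP + \<epsilon>CR) (\<delta>DP + \<delta>CR) (F \<Otimes>\<^sub>M borel)
           (full_training F borel Phi A) (full_removal M)"
  unfolding certified_removal_def
proof (intro ballI allI impI conjI)
  fix T :: "(('x \<Rightarrow> 'f) \<times> 'f) set" and D :: "('x \<times> 'y) multiset" and x :: "'x \<times> 'y"
  assume T[measurable]: "T \<in> sets (F \<Otimes>\<^sub>M borel)" and xD: "x \<in># D"
  define D' where "D' = D - {#x#}"
  have DD': "D = add_mset x D'" using xD by (simp add: D'_def)
  have nb1: "neighbors D D'" and nb2: "neighbors D' D" unfolding neighbors_def DD' by auto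
  have dp1: "\<forall>S\<in>sets F. measure (Phi D) S \<le> exp \<epsilon>DP * measure (Phi D') S + \<delta>DP"
    using Phi_DP nb1 unfolding differentially_private_def by blast
  have dp2: "\<forall>S\<in>sets F. measure (Phi D') S \<le> exp \<epsilon>DP * measure (Phi D) S + \<delta>DP"
    using Phi_DP nb2 unfolding differentially_private_def by blast
  have PhiP: "prob_space (Phi D0)" "sets (Phi D0) = sets F" for D0
    using Phi_prob[of D0] by (auto simp: space_prob_algebra)
  have spF: "space F \<noteq> {}"
    using prob_space.not_empty[OF PhiP(1)] sets_eq_imp_space_eq[OF PhiP(2)] by metis
  then obtain phi0 where phi0: "phi0 \<in> space F" by blast
  have Aphi: "prob_space (A D0 phi)" "sets (A D0 phi) = sets borel" if "phi \<in> space F" for D0 phi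
    using measurable_space[OF A_kernel that] by (auto simp: space_prob_algebra)
  have pairm: "(\<lambda>w. (phi, w)) \<in> A D0 phi \<rightarrow>\<^sub>M F \<Otimes>\<^sub>M borel" if "phi \<in> space F" for D0 phi
    using that by (simp add: measurable_cong_sets[OF Aphi(2)[OF that] refl])
  define K where "K D0 phi = distr (A D0 phi) (F \<Otimes>\<^sub>M borel) (\<lambda>w. (phi, w))" for D0 phi
  have K: "K D0 \<in> F \<rightarrow>\<^sub>M prob_algebra (F \<Otimes>\<^sub>M borel)" for D0
  proof (rule measurable_prob_algebraI)
    show "prob_space (K D0 phi)" if "phi \<in> space F" for phi
      unfolding K_def using Aphi[OF that] pairm[OF that] by (intro prob_space.prob_space_distr) auto
    have Am: "A D0 \<in> F \<rightarrow>\<^sub>M subprob_algebra borel" using A_kernel by (rule measurable_prob_algebraD)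
    show "K D0 \<in> F \<rightarrow>\<^sub>M subprob_algebra (F \<Otimes>\<^sub>M borel)"
      unfolding K_def by (rule measurable_distr2[OF _ Am]) simp
  qed
  define fr where "fr = (\<lambda>pw. full_removal M pw D x)"
  have fr_eq: "fr = (\<lambda>pw. (fst pw, (\<lambda>(phi, w). M phi w D x) pw))"
    by (auto simp: fr_def full_removal_def fun_eq_iff split: prod.splits)
  have fr: "fr \<in> F \<Otimes>\<^sub>M borel \<rightarrow>\<^sub>M F \<Otimes>\<^sub>M borel"
    unfolding fr_eq using M_meas[of D x] by (intro measurable_Pair) auto
  define R where "R phi = distr (K D phi) (F \<Otimes>\<^sub>M borel) fr" for phi
  have R: "R \<in> F \<rightarrow>\<^sub>M prob_algebra (F \<Otimes>\<^sub>M borel)"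
    unfolding R_def by (rule measurable_compose[OF K measurable_distr_prob_space[OF fr]])
  have spne: "space (Phi D) \<noteq> {}" using PhiP(1) by (rule prob_space.not_empty)
  have ft: "full_training F borel Phi A D0 = Phi D0 \<bind> K D0" for D0
    unfolding full_training_def K_def by simp
  have eq1: "distr (full_training F borel Phi A D) (F \<Otimes>\<^sub>M borel) (\<lambda>h. full_removal M h D x)
      = Phi D \<bind> R"
    unfolding ft fr_def[symmetric] R_def
    by (rule distr_bind[OF _ spne fr]) (simp add: measurable_cong_sets[OF PhiP(2) refl] measurable_prob_algebraD[OF K])
  have m1: "measure (Phi D \<bind> R) T = (\<integral>phi. measure (R phi) T \<partial>Phi D)"
    by (rule measure_bind_real[OF Phi_prob R T])
  have m2: "measure (Phi D' \<bind> K D') T = (\<integral>phi. measure (K D' phi) T \<partial>Phi D')"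
    by (rule measure_bind_real[OF Phi_prob K T])
  have hR: "measure (R phi) T = measure (distr (A D phi) borel (\<lambda>w. M phi w D x)) (Pair phi -` T)"
    if phi: "phi \<in> space F" for phi
  proof -
    have Mm: "(\<lambda>w. M phi w D x) \<in> A D phi \<rightarrow>\<^sub>M borel"
      using measurable_Pair2[OF M_meas[of D x] phi]
      by (simp add: measurable_cong_sets[OF Aphi(2)[OF phi] refl])
    have "R phi = distr (A D phi) (F \<Otimes>\<^sub>M borel) (fr \<circ> (\<lambda>w. (phi, w)))"
      unfolding R_def K_def by (rule distr_distr[OF fr pairm[OF phi]])
    then have "measure (R phi) T = measure (A D phi) ((fr \<circ> (\<lambda>w. (phi, w))) -` T \<inter> space (A D phi))"
      using fr pairm[OF phi] by (simp add: measure_distr)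
    also have "\<dots> = measure (A D phi) ((\<lambda>w. M phi w D x) -` (Pair phi -` T) \<inter> space (A D phi))"
      by (simp add: fr_def full_removal_def vimage_def)
    also have "\<dots> = measure (distr (A D phi) borel (\<lambda>w. M phi w D x)) (Pair phi -` T)"
      using Mm by (simp add: measure_distr)
    finally show ?thesis .
  qed
  have hK: "measure (K D' phi) T = measure (A D' phi) (Pair phi -` T)"
    if phi: "phi \<in> space F" for phi
  proof -
    have "measure (K D' phi) T = measure (A D' phi) ((\<lambda>w. (phi, w)) -` T \<inter> space (A D' phi))"
      unfolding K_def using pairm[OF phi] by (simp add: measure_distr)
    also have "\<dots> = measure (A D' phi) (Pair phi -` T)"
      using sets_eq_imp_space_eq[OF Aphi(2)[OF phi]] by simp
    finally show ?thesis .
  qed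
  have CR: "measure (R phi) T \<le> exp \<epsilon>CR * measure (K D' phi) T + \<delta>CR \<and>
            measure (K D' phi) T \<le> exp \<epsilon>CR * measure (R phi) T + \<delta>CR"
    if phi: "phi \<in> space F" for phi
  proof -
    have TP: "Pair phi -` T \<in> sets borel" using T by (rule sets_Pair1)
    have "measure (distr (A D phi) borel (\<lambda>w. M phi w D x)) (Pair phi -` T) \<le> exp \<epsilon>CR * measure (A (D - {#x#}) phi) (Pair phi -` T) + \<delta>CR \<and>
          measure (A (D - {#x#}) phi) (Pair phi -` T) \<le> exp \<epsilon>CR * measure (distr (A D phi) borel (\<lambda>w. M phi w D x)) (Pair phi -` T) + \<delta>CR"
      using M_CR[OF phi, unfolded certified_removal_def] TP xD by blast
    then show ?thesis by (simp only: hR[OF phi] hK[OF phi] D'_def[symmetric])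
  qed
  have d2: "0 \<le> \<delta>CR"
  proof -
    have "measure (distr (A D phi0) borel (\<lambda>w. M phi0 w D x)) {} \<le> exp \<epsilon>CR * measure (A (D - {#x#}) phi0) {} + \<delta>CR"
      using M_CR[OF phi0, unfolded certified_removal_def] xD sets.empty_sets by blast
    then show ?thesis by simp
  qed
  have rm: "(\<lambda>phi. measure (R phi) T) \<in> borel_measurable F"
    by (rule measurable_compose[OF R measurable_measure_prob_algebra[OF T]])
  have km: "(\<lambda>phi. measure (K D' phi) T) \<in> borel_measurable F"
    by (rule measurable_compose[OF K measurable_measure_prob_algebra[OF T]])
  have R01: "\<forall>phi\<in>space F. 0 \<le> measure (R phi) T \<and> measure (R phi) T \<le> 1"
    using measurable_space[OF R] by (auto simp: space_prob_algebra prob_space.prob_le_1)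
  have K01: "\<forall>phi\<in>space F. 0 \<le> measure (K D' phi) T \<and> measure (K D' phi) T \<le> 1"
    using measurable_space[OF K] by (auto simp: space_prob_algebra prob_space.prob_le_1)
  have e1: "0 \<le> exp \<epsilon>DP" and e2: "0 \<le> exp \<epsilon>CR" by auto
  have rk1: "\<forall>phi\<in>space F. measure (R phi) T \<le> exp \<epsilon>CR * measure (K D' phi) T + \<delta>CR" using CR by blast
  have rk2: "\<forall>phi\<in>space F. measure (K D' phi) T \<le> exp \<epsilon>CR * measure (R phi) T + \<delta>CR" using CR by blast
  note c1 = compose[OF PhiP(1) PhiP(1) PhiP(2) PhiP(2) dp1 e1 e2 d2 rm km R01 K01 rk1]
  note c2 = compose[OF PhiP(1) PhiP(1) PhiP(2) PhiP(2) dp2 e1 e2 d2 km rm K01 R01 rk2]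
  show "measure (distr (full_training F borel Phi A D) (F \<Otimes>\<^sub>M borel) (\<lambda>h. full_removal M h D x)) T
      \<le> exp (\<epsilon>DP + \<epsilon>CR) * measure (full_training F borel Phi A (D - {#x#})) T + (\<delta>DP + \<delta>CR)"
    unfolding eq1 unfolding m1 D'_def[symmetric] ft unfolding m2 exp_add using c1 by linarith
  show "measure (full_training F borel Phi A (D - {#x#})) T
      \<le> exp (\<epsilon>DP + \<epsilon>CR) * measure (distr (full_training F borel Phi A D) (F \<Otimes>\<^sub>M borel) (\<lambda>h. full_removal M h D x)) T + (\<delta>DP + \<delta>CR)"
    unfolding eq1 unfolding m1 D'_def[symmetric] ft unfolding m2 exp_add using c2 by linarith
qed

end
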